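(* Let $G$ be a countable group, equipped with a proper left-invariant metric, acting by isometries on a metric space $X$ that has straight finite decomposition complexity. If there is a point $x_0\in X$ such that for every $R>0$ the $R$-coarse stabilizer $\{g\in G: d(g.x_0,x_0)\le R\}$ (with the metric restricted from $G$) has straight finite decomposition complexity, then $G$ has straight finite decomposition complexity.
   Context: A metric is proper if bounded sets are finite. For metric families $\mathcal X,\mathcal Y$ and $R>0$, $\mathcal X\xrightarrow{R}\mathcal Y$ means every $Z\in\mathcal X$ can be written $Z=Z^0\cup Z^1$ with each $Z^i$ a union of members of $\mathcal Y$ that are pairwise at distance $>R$. A metric space $X$ (identified with the family $\{X\}$) has straight finite decomposition complexity if for every sequence $R_1\le R_2\le\cdots$ there exist $n$ and metric families $\mathcal Y^1,\dots,\mathcal Y^n$ with $\{X\}\xrightarrow{R_1}\mathcal Y^1$, $\mathcal Y^{i-1}\xrightarrow{R_i}\mathcal Y^i$ ($2\le i\le n$), and $\mathcal Y^n$ uniformly bounded. *)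

theory Defs
  imports "HOL-Analysis.Analysis" "HOL-Algebra.Group_Action"
begin

text \<open>Distance between two subsets (infimum of pointwise distances), valued in the
extended reals so that the distance to the empty set is infinite.\<close>
definition set_dist :: "('a \<Rightarrow> 'a \<Rightarrow> real) \<Rightarrow> 'a set \<Rightarrow> 'a set \<Rightarrow> ereal" where
  "set_dist d A B = (INF a\<in>A. INF b\<in>B. ereal (d a b))"

definition R_disjoint_union_of ::
    "('a \<Rightarrow> 'a \<Rightarrow> real) \<Rightarrow> real \<Rightarrow> 'a set set \<Rightarrow> 'a set \<Rightarrow> bool" where
  "R_disjoint_union_of d R \<Y> Z \<longleftrightarrow>
     (\<exists>\<F>. \<F> \<subseteq> \<Y> \<and> Z = \<Union>\<F> \<and>
        (\<forall>A\<in>\<F>. \<forall>B\<in>\<F>. A \<noteq> B \<longrightarrow> ereal R < set_dist d A B))"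

definition decomposes ::
    "('a \<Rightarrow> 'a \<Rightarrow> real) \<Rightarrow> 'a set set \<Rightarrow> real \<Rightarrow> 'a set set \<Rightarrow> bool" where
  "decomposes d \<X> R \<Y> \<longleftrightarrow>
     (\<forall>Z\<in>\<X>. \<exists>Z0 Z1. Z = Z0 \<union> Z1 \<and>
        R_disjoint_union_of d R \<Y> Z0 \<and> R_disjoint_union_of d R \<Y> Z1)"

definition uniformly_bounded :: "('a \<Rightarrow> 'a \<Rightarrow> real) \<Rightarrow> 'a set set \<Rightarrow> bool" where
  "uniformly_bounded d \<Y> \<longleftrightarrow> (\<exists>B. \<forall>Y\<in>\<Y>. \<forall>a\<in>Y. \<forall>b\<in>Y. d a b \<le> B)"

text \<open>Straight finite decomposition complexity of the metric space (M, d).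
 Sequences are indexed from 0: R 0 \<le> R 1 \<le> ..., families Y 0, ..., Y (n-1).\<close>
definition straight_FDC :: "'a set \<Rightarrow> ('a \<Rightarrow> 'a \<Rightarrow> real) \<Rightarrow> bool" where
  "straight_FDC M d \<longleftrightarrow>
     (\<forall>R :: nat \<Rightarrow> real. (\<forall>i. 0 < R i) \<and> mono R \<longrightarrow>
        (\<exists>n \<ge> 1. \<exists>\<Y> :: nat \<Rightarrow> 'a set set.
           (\<forall>i<n. \<Y> i \<subseteq> Pow M) \<and>
           decomposes d {M} (R 0) (\<Y> 0) \<and>
           (\<forall>i. 0 < i \<and> i < n \<longrightarrow> decomposes d (\<Y> (i - 1)) (R i) (\<Y> i)) \<and>
           uniformly_bounded d (\<Y> (n - 1))))"

end

theory Submission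
  imports Defs
begin

lemma sd_gt_imp:
  assumes "ereal c < set_dist d A B" "a \<in> A" "b \<in> B"
  shows "c < d a b"
proof -
  have "set_dist d A B \<le> (INF b\<in>B. ereal (d a b))"
    unfolding set_dist_def by (rule INF_lower) (rule assms(2))
  also have "\<dots> \<le> ereal (d a b)" by (rule INF_lower) (rule assms(3))
  finally have "set_dist d A B \<le> ereal (d a b)" .
  with assms(1) have "ereal c < ereal (d a b)" by (rule less_le_trans)
  thus ?thesis by simp
qed

lemma sd_ge:
  assumes "\<And>a b. a \<in> A \<Longrightarrow> b \<in> B \<Longrightarrow> c \<le> d a b"
  shows "ereal c \<le> set_dist d A B"
  unfolding set_dist_def by (intro INF_greatest) (simp add: assms)

lemma sd_mono:
  assumes "A \<subseteq> A'" "B \<subseteq> B'"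
  shows "set_dist d A' B' \<le> set_dist d A B"
  unfolding set_dist_def by (intro INF_superset_mono assms order_refl)

lemma sd_image:
  assumes "\<And>a b. a \<in> A \<Longrightarrow> b \<in> B \<Longrightarrow> d (T a) (T b) = d a b"
  shows "set_dist d (T ` A) (T ` B) = set_dist d A B"
  unfolding set_dist_def image_image by (intro INF_cong refl) (simp add: assms)

lemma decompE:
  assumes D: "decomposes d \<X> r \<Y>" and X: "X \<in> \<X>"
    and T: "\<And>Z0 Z1. X = Z0 \<union> Z1 \<Longrightarrow> R_disjoint_union_of d r \<Y> Z0 \<Longrightarrow>
              R_disjoint_union_of d r \<Y> Z1 \<Longrightarrow> P"
  shows P
proof -
  have "\<forall>Z\<in>\<X>. \<exists>Z0 Z1. Z = Z0 \<union> Z1 \<and> R_disjoint_union_of d r \<Y> Z0 \<and> R_disjoint_union_of d r \<Y> Z1"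
    using D unfolding decomposes_def .
  hence "\<exists>Z0 Z1. X = Z0 \<union> Z1 \<and> R_disjoint_union_of d r \<Y> Z0 \<and> R_disjoint_union_of d r \<Y> Z1"
    using X by (rule bspec)
  then obtain Z0 where "\<exists>Z1. X = Z0 \<union> Z1 \<and> R_disjoint_union_of d r \<Y> Z0 \<and> R_disjoint_union_of d r \<Y> Z1"
    by (rule exE)
  then obtain Z1 where h: "X = Z0 \<union> Z1 \<and> R_disjoint_union_of d r \<Y> Z0 \<and> R_disjoint_union_of d r \<Y> Z1"
    by (rule exE)
  show P by (rule T[OF conjunct1[OF h] conjunct1[OF conjunct2[OF h]] conjunct2[OF conjunct2[OF h]]])
qed

lemma sfdcE:
  fixes R :: "nat \<Rightarrow> real" and M :: "'a set"
  assumes S: "straight_FDC M d" and R: "(\<forall>i. 0 < R i) \<and> mono R"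
    and T: "\<And>n Y. n \<ge> 1 \<Longrightarrow> (\<forall>i<n. Y i \<subseteq> Pow M) \<Longrightarrow> decomposes d {M} (R 0) (Y 0) \<Longrightarrow>
       (\<forall>i. 0 < i \<and> i < n \<longrightarrow> decomposes d (Y (i - 1)) (R i) (Y i)) \<Longrightarrow>
       uniformly_bounded d (Y (n - 1)) \<Longrightarrow> P"
  shows P
proof -
  have "\<exists>n\<ge>1. \<exists>Y :: nat \<Rightarrow> 'a set set.
           (\<forall>i<n. Y i \<subseteq> Pow M) \<and>
           decomposes d {M} (R 0) (Y 0) \<and>
           (\<forall>i. 0 < i \<and> i < n \<longrightarrow> decomposes d (Y (i - 1)) (R i) (Y i)) \<and>
           uniformly_bounded d (Y (n - 1))"
    using S[unfolded straight_FDC_def, rule_format, OF R] .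
  then obtain n :: nat where n: "n \<ge> 1 \<and> (\<exists>Y :: nat \<Rightarrow> 'a set set.
           (\<forall>i<n. Y i \<subseteq> Pow M) \<and>
           decomposes d {M} (R 0) (Y 0) \<and>
           (\<forall>i. 0 < i \<and> i < n \<longrightarrow> decomposes d (Y (i - 1)) (R i) (Y i)) \<and>
           uniformly_bounded d (Y (n - 1)))" by (rule exE)
  from conjunct2[OF n] obtain Y :: "nat \<Rightarrow> 'a set set" where Y:
    "(\<forall>i<n. Y i \<subseteq> Pow M) \<and>
           decomposes d {M} (R 0) (Y 0) \<and>
           (\<forall>i. 0 < i \<and> i < n \<longrightarrow> decomposes d (Y (i - 1)) (R i) (Y i)) \<and>
           uniformly_bounded d (Y (n - 1))" by (rule exE)
  show P by (rule T[OF conjunct1[OF n] conjunct1[OF Y] conjunct1[OF conjunct2[OF Y]]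
      conjunct1[OF conjunct2[OF conjunct2[OF Y]]] conjunct2[OF conjunct2[OF conjunct2[OF Y]]]])
qed

lemma decomp_pre:
  assumes pre: "\<And>A g. g \<in> pre A \<longleftrightarrow> g \<in> C \<and> \<pi> g \<in> A"
    and K: "\<And>g h. g \<in> C \<Longrightarrow> h \<in> C \<Longrightarrow> d1 g h \<le> s \<Longrightarrow> d2 (\<pi> g) (\<pi> h) \<le> t"
    and rs: "r < s"
    and D: "decomposes d2 \<X> t \<Y>"
  shows "decomposes d1 (pre ` \<X>) r (pre ` \<Y>)"
proof -
  have key: "R_disjoint_union_of d1 r (pre ` \<Y>) (pre Y)"
    if "R_disjoint_union_of d2 t \<Y> Y" for Y
  proof -
    from that obtain F where F1: "F \<subseteq> \<Y>" and F2: "Y = \<Union>F"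
      and F3: "\<forall>A\<in>F. \<forall>B\<in>F. A \<noteq> B \<longrightarrow> ereal t < set_dist d2 A B"
      unfolding R_disjoint_union_of_def by blast
    have e1: "pre Y = \<Union>(pre ` F)" unfolding F2 by (auto simp: pre)
    have e2: "pre ` F \<subseteq> pre ` \<Y>" using F1 by (rule image_mono)
    have e3: "ereal r < set_dist d1 (pre A) (pre B)" if AB: "A \<in> F" "B \<in> F" "pre A \<noteq> pre B" for A B
    proof -
      have "A \<noteq> B" using AB(3) by metis
      with F3 AB(1,2) have sep: "ereal t < set_dist d2 A B" by blast
      have "ereal s \<le> set_dist d1 (pre A) (pre B)"
      proof (rule sd_ge)
        fix g h assume g: "g \<in> pre A" and h: "h \<in> pre B"
        from g have gC: "g \<in> C" and gA: "\<pi> g \<in> A" unfolding pre by simp_all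
        from h have hC: "h \<in> C" and hB: "\<pi> h \<in> B" unfolding pre by simp_all
        have lt: "t < d2 (\<pi> g) (\<pi> h)" by (rule sd_gt_imp[OF sep gA hB])
        show "s \<le> d1 g h"
        proof (rule ccontr)
          assume "\<not> s \<le> d1 g h"
          hence "d1 g h \<le> s" by simp
          from K[OF gC hC this] lt show False by simp
        qed
      qed
      moreover have "ereal r < ereal s" using rs by simp
      ultimately show ?thesis by (metis less_le_trans)
    qed
    have e3': "\<forall>A'\<in>pre ` F. \<forall>B'\<in>pre ` F. A' \<noteq> B' \<longrightarrow> ereal r < set_dist d1 A' B'"
    proof (intro ballI impI)
      fix A' B' assume a: "A' \<in> pre ` F" and b: "B' \<in> pre ` F" and ne: "A' \<noteq> B'"
      from a obtain A where A: "A' = pre A" "A \<in> F" by (rule imageE)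
      from b obtain B where B: "B' = pre B" "B \<in> F" by (rule imageE)
      have "pre A \<noteq> pre B" using ne unfolding A(1) B(1) .
      from e3[OF A(2) B(2) this] show "ereal r < set_dist d1 A' B'" unfolding A(1) B(1) .
    qed
    show ?thesis unfolding R_disjoint_union_of_def
      by (rule exI[of _ "pre ` F"], rule conjI, rule e2, rule conjI, rule e1, rule e3')
  qed
  show ?thesis
    unfolding decomposes_def
  proof (rule ballI)
    fix Z assume "Z \<in> pre ` \<X>"
    then obtain X where X2: "Z = pre X" and X1: "X \<in> \<X>" by (rule imageE)
    obtain X0 X1' where u: "X = X0 \<union> X1'" and r0: "R_disjoint_union_of d2 t \<Y> X0"
      and r1: "R_disjoint_union_of d2 t \<Y> X1'" by (rule decompE[OF D X1])
    have eq: "Z = pre X0 \<union> pre X1'" unfolding X2 u by (auto simp: pre)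
    show "\<exists>Z0 Z1. Z = Z0 \<union> Z1 \<and> R_disjoint_union_of d1 r (pre ` \<Y>) Z0 \<and>
        R_disjoint_union_of d1 r (pre ` \<Y>) Z1"
      by (rule exI, rule exI, rule conjI, rule eq, rule conjI, rule key[OF r0], rule key[OF r1])
  qed
qed

locale liftctx =
  fixes C :: "'g set" and d :: "'g \<Rightarrow> 'g \<Rightarrow> real" and S :: "'g set"
    and T :: "'g \<Rightarrow> 'g \<Rightarrow> 'g" and c :: "'g set \<Rightarrow> 'g" and \<W> :: "'g set set"
  assumes iso: "\<And>g a b. g \<in> C \<Longrightarrow> a \<in> C \<Longrightarrow> b \<in> C \<Longrightarrow> d (T g a) (T g b) = d a b"
    and cW: "\<And>W. W \<in> \<W> \<Longrightarrow> c W \<in> C \<and> W \<subseteq> T (c W) ` S"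
    and SC: "S \<subseteq> C"
begin

definition lift :: "'g set set \<Rightarrow> 'g set set" where
  "lift \<Z> = {W \<inter> T (c W) ` A | W A. W \<in> \<W> \<and> A \<in> \<Z>}"

lemma sub:
  assumes W: "W \<in> \<W>" and Y: "Y \<subseteq> S" and R: "R_disjoint_union_of d r \<Z> Y"
    and Z: "\<Z> \<subseteq> Pow S"
  shows "R_disjoint_union_of d r (lift \<Z>) (W \<inter> T (c W) ` Y)"
proof -
  define g where "g = c W"
  have g: "g \<in> C" using cW[OF W] unfolding g_def by (rule conjunct1)
  from R obtain F where F1: "F \<subseteq> \<Z>" and F2: "Y = \<Union>F"
      and F3: "\<forall>A\<in>F. \<forall>B\<in>F. A \<noteq> B \<longrightarrow> ereal r < set_dist d A B"
      unfolding R_disjoint_union_of_def by blast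
  define F' where "F' = (\<lambda>A. W \<inter> T g ` A) ` F"
  have e1: "W \<inter> T (c W) ` Y = \<Union>F'" unfolding F'_def F2 g_def by blast
  have e2: "F' \<subseteq> lift \<Z>"
  proof
    fix V assume "V \<in> F'"
    then obtain A where A: "A \<in> F" "V = W \<inter> T g ` A" unfolding F'_def by (rule imageE)
    have "A \<in> \<Z>" using A(1) F1 by blast
    thus "V \<in> lift \<Z>" unfolding lift_def using A(2) W g_def by blast
  qed
  have e3: "ereal r < set_dist d (W \<inter> T g ` A) (W \<inter> T g ` B)"
    if AB: "A \<in> F" "B \<in> F" "W \<inter> T g ` A \<noteq> W \<inter> T g ` B" for A B
  proof -
    have "A \<noteq> B" using AB(3) by metis
    with F3 AB(1,2) have sep: "ereal r < set_dist d A B" by blast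
    have AS: "A \<subseteq> C" using AB(1) F1 Z SC by blast
    have BS: "B \<subseteq> C" using AB(2) F1 Z SC by blast
    have "set_dist d (T g ` A) (T g ` B) = set_dist d A B"
    proof (rule sd_image)
      fix a b assume "a \<in> A" "b \<in> B"
      hence "a \<in> C" "b \<in> C" using AS BS by (auto simp only: subset_iff)
      thus "d (T g a) (T g b) = d a b" by (rule iso[OF g])
    qed
    moreover have "set_dist d (T g ` A) (T g ` B) \<le> set_dist d (W \<inter> T g ` A) (W \<inter> T g ` B)"
      by (rule sd_mono) (rule Int_lower2)+
    ultimately show ?thesis using sep by (metis less_le_trans)
  qed
  have e3': "\<forall>A'\<in>F'. \<forall>B'\<in>F'. A' \<noteq> B' \<longrightarrow> ereal r < set_dist d A' B'"
  proof (intro ballI impI)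
    fix A' B' assume a: "A' \<in> F'" and b: "B' \<in> F'" and ne: "A' \<noteq> B'"
    from a obtain A where A: "A' = W \<inter> T g ` A" "A \<in> F" unfolding F'_def by (rule imageE)
    from b obtain B where B: "B' = W \<inter> T g ` B" "B \<in> F" unfolding F'_def by (rule imageE)
    have "W \<inter> T g ` A \<noteq> W \<inter> T g ` B" using ne unfolding A(1) B(1) .
    from e3[OF A(2) B(2) this] show "ereal r < set_dist d A' B'" unfolding A(1) B(1) .
  qed
  show ?thesis unfolding R_disjoint_union_of_def
    by (rule exI[of _ F'], rule conjI, rule e2, rule conjI, rule e1, rule e3')
qed

lemma lift_mem: "V \<in> lift \<Z> \<Longrightarrow> (\<And>W A. W \<in> \<W> \<Longrightarrow> A \<in> \<Z> \<Longrightarrow> V = W \<inter> T (c W) ` A \<Longrightarrow> P) \<Longrightarrow> P"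
  unfolding lift_def by blast

lemma split_int: "W \<inter> T g ` (Z0 \<union> Z1) = (W \<inter> T g ` Z0) \<union> (W \<inter> T g ` Z1)"
  by blast

lemma lift_a:
  assumes D: "decomposes d {S} r \<Z>" and Z: "\<Z> \<subseteq> Pow S"
  shows "decomposes d \<W> r (lift \<Z>)"
  unfolding decomposes_def
proof
  fix W assume W: "W \<in> \<W>"
  obtain Z0 Z1 where u: "S = Z0 \<union> Z1" and r0: "R_disjoint_union_of d r \<Z> Z0"
    and r1: "R_disjoint_union_of d r \<Z> Z1" by (rule decompE[OF D singletonI])
  have "W \<subseteq> T (c W) ` S" using cW[OF W] by (rule conjunct2)
  hence "W = W \<inter> T (c W) ` S" by (rule Int_absorb2[symmetric])
  hence eq: "W = (W \<inter> T (c W) ` Z0) \<union> (W \<inter> T (c W) ` Z1)" unfolding u split_int .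
  have s0: "Z0 \<subseteq> S" unfolding u by (rule Un_upper1)
  have s1: "Z1 \<subseteq> S" unfolding u by (rule Un_upper2)
  show "\<exists>Z0 Z1. W = Z0 \<union> Z1 \<and> R_disjoint_union_of d r (lift \<Z>) Z0 \<and>
        R_disjoint_union_of d r (lift \<Z>) Z1"
    by (intro exI conjI, rule eq, rule sub[OF W s0 r0 Z], rule sub[OF W s1 r1 Z])
qed

lemma lift_b:
  assumes D: "decomposes d \<Z>1 r \<Z>2" and Z1: "\<Z>1 \<subseteq> Pow S" and Z2: "\<Z>2 \<subseteq> Pow S"
  shows "decomposes d (lift \<Z>1) r (lift \<Z>2)"
  unfolding decomposes_def
proof
  fix V assume "V \<in> lift \<Z>1"
  then obtain W Z where W: "W \<in> \<W>" and ZZ: "Z \<in> \<Z>1" and V: "V = W \<inter> T (c W) ` Z"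
    by (rule lift_mem)
  obtain Z0 Z1 where u: "Z = Z0 \<union> Z1" and r0: "R_disjoint_union_of d r \<Z>2 Z0"
    and r1: "R_disjoint_union_of d r \<Z>2 Z1" by (rule decompE[OF D ZZ])
  have eq: "V = (W \<inter> T (c W) ` Z0) \<union> (W \<inter> T (c W) ` Z1)" unfolding V u split_int ..
  have "Z \<subseteq> S" using ZZ Z1 by blast
  hence s0: "Z0 \<subseteq> S" and s1: "Z1 \<subseteq> S" unfolding u by simp_all
  show "\<exists>Z0 Z1. V = Z0 \<union> Z1 \<and> R_disjoint_union_of d r (lift \<Z>2) Z0 \<and>
        R_disjoint_union_of d r (lift \<Z>2) Z1"
    by (intro exI conjI, rule eq, rule sub[OF W s0 r0 Z2], rule sub[OF W s1 r1 Z2])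
qed

lemma lift_c:
  assumes U: "uniformly_bounded d \<Z>" and Z: "\<Z> \<subseteq> Pow S"
  shows "uniformly_bounded d (lift \<Z>)"
proof -
  from U obtain B where B: "\<forall>Y\<in>\<Z>. \<forall>a\<in>Y. \<forall>b\<in>Y. d a b \<le> B"
    unfolding uniformly_bounded_def by blast
  have "\<forall>V\<in>lift \<Z>. \<forall>a\<in>V. \<forall>b\<in>V. d a b \<le> B"
  proof (intro ballI)
    fix V a b assume VL: "V \<in> lift \<Z>" and a: "a \<in> V" and b: "b \<in> V"
    from VL obtain W Z' where W: "W \<in> \<W>" and ZZ: "Z' \<in> \<Z>" and V: "V = W \<inter> T (c W) ` Z'"
      by (rule lift_mem)
    from a V obtain a' where a': "a' \<in> Z'" "a = T (c W) a'" by blast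
    from b V obtain b' where b': "b' \<in> Z'" "b = T (c W) b'" by blast
    have "Z' \<subseteq> C" using ZZ Z SC by blast
    hence "a' \<in> C" "b' \<in> C" using a'(1) b'(1) by blast+
    hence "d a b = d a' b'" unfolding a'(2) b'(2) using cW[OF W] iso by blast
    also have "\<dots> \<le> B" using B ZZ a'(1) b'(1) by blast
    finally show "d a b \<le> B" .
  qed
  thus ?thesis unfolding uniformly_bounded_def by blast
qed

lemma lift_d: "\<W> \<subseteq> Pow C \<Longrightarrow> lift \<Z> \<subseteq> Pow C"
  unfolding lift_def by blast

end


theorem proposition5p4:
  fixes G :: "('g, 'b) monoid_scheme"
    and dG :: "'g \<Rightarrow> 'g \<Rightarrow> real"
    and M :: "'x set"
    and dX :: "'x \<Rightarrow> 'x \<Rightarrow> real"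
    and \<phi> :: "'g \<Rightarrow> 'x \<Rightarrow> 'x"
    and x0 :: 'x
  assumes "group G"
    and "countable (carrier G)"
    and "Metric_space (carrier G) dG"
    and "\<And>S. S \<subseteq> carrier G \<Longrightarrow> Metric_space.mbounded (carrier G) dG S \<Longrightarrow> finite S"
    and "\<And>g a b. g \<in> carrier G \<Longrightarrow> a \<in> carrier G \<Longrightarrow> b \<in> carrier G \<Longrightarrow>
           dG (g \<otimes>\<^bsub>G\<^esub> a) (g \<otimes>\<^bsub>G\<^esub> b) = dG a b"
    and "Metric_space M dX"
    and "group_action G M \<phi>"
    and "\<And>g x y. g \<in> carrier G \<Longrightarrow> x \<in> M \<Longrightarrow> y \<in> M \<Longrightarrow> dX (\<phi> g x) (\<phi> g y) = dX x y"
    and "straight_FDC M dX"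
    and "x0 \<in> M"
    and "\<And>R. R > 0 \<Longrightarrow> straight_FDC {g \<in> carrier G. dX (\<phi> g x0) x0 \<le> R} dG"
  shows "straight_FDC (carrier G) dG"
proof -
  interpret G: group G by fact
  interpret MG: Metric_space "carrier G" dG by fact
  interpret MX: Metric_space M dX by fact
  interpret A: group_action G M \<phi> by fact
  have orb: "\<phi> g x \<in> M" if "g \<in> carrier G" "x \<in> M" for g x
    using A.element_image that by blast
  have one: "\<phi> \<one>\<^bsub>G\<^esub> x = x" if "x \<in> M" for x
    using fun_cong[OF A.id_eq_one, of x] that by simp
  have backr: "dX (\<phi> (inv\<^bsub>G\<^esub> h \<otimes>\<^bsub>G\<^esub> g) x0) x0 = dX (\<phi> g x0) (\<phi> h x0)"
    if "g \<in> carrier G" "h \<in> carrier G" for g h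
  proof -
    have "dX (\<phi> (inv\<^bsub>G\<^esub> h \<otimes>\<^bsub>G\<^esub> g) x0) x0
        = dX (\<phi> (inv\<^bsub>G\<^esub> h) (\<phi> g x0)) (\<phi> (inv\<^bsub>G\<^esub> h) (\<phi> h x0))"
    proof -
      have "\<phi> (inv\<^bsub>G\<^esub> h) (\<phi> h x0) = \<phi> (inv\<^bsub>G\<^esub> h \<otimes>\<^bsub>G\<^esub> h) x0"
        using A.composition_rule[of x0 "inv\<^bsub>G\<^esub> h" h] that assms(10) by simp
      also have "\<dots> = x0" using that assms(10) one by simp
      finally show ?thesis
        using A.composition_rule[of x0 "inv\<^bsub>G\<^esub> h" g] that assms(10) by simp
    qed
    also have "\<dots> = dX (\<phi> g x0) (\<phi> h x0)"
      using assms(8) orb that assms(10) by simp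
    finally show ?thesis .
  qed
  show ?thesis
    unfolding straight_FDC_def
  proof (intro allI impI)
    fix R :: "nat \<Rightarrow> real"
    assume R: "(\<forall>i. 0 < R i) \<and> mono R"
    define ball where "ball r = {k \<in> carrier G. dG k \<one>\<^bsub>G\<^esub> \<le> r}" for r
    have ball_fin: "finite (ball r)" for r
    proof (rule assms(4))
      show "ball r \<subseteq> carrier G" unfolding ball_def by auto
      show "MG.mbounded (ball r)" unfolding MG.mbounded_def
        by (rule exI[of _ "\<one>\<^bsub>G\<^esub>"], rule exI[of _ r])
           (auto simp: ball_def MG.commute)
    qed
    define \<rho> where "\<rho> r = 1 + (\<Sum>k\<in>ball r. dX (\<phi> k x0) x0)" for r
    have ball_mem: "dX (\<phi> k x0) x0 \<le> \<rho> r" if "k \<in> ball r" for k r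
    proof -
      have "dX (\<phi> k x0) x0 \<le> (\<Sum>k\<in>ball r. dX (\<phi> k x0) x0)"
        by (rule member_le_sum[OF that _ ball_fin])
           (use orb assms(10) in \<open>auto simp: ball_def\<close>)
      thus ?thesis unfolding \<rho>_def by simp
    qed
    have \<rho>_pos: "0 < \<rho> r" for r
    proof -
      have "0 \<le> (\<Sum>k\<in>ball r. dX (\<phi> k x0) x0)"
        by (rule sum_nonneg) (use orb assms(10) in \<open>auto simp: ball_def\<close>)
      thus ?thesis unfolding \<rho>_def by simp
    qed
    have \<rho>_mono: "\<rho> r \<le> \<rho> r'" if "r \<le> r'" for r r'
    proof -
      have "(\<Sum>k\<in>ball r. dX (\<phi> k x0) x0) \<le> (\<Sum>k\<in>ball r'. dX (\<phi> k x0) x0)"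
        by (rule sum_mono2[OF ball_fin]) (use orb assms(10) that in \<open>auto simp: ball_def\<close>)
      thus ?thesis unfolding \<rho>_def by simp
    qed
    have K: "dX (\<phi> g x0) (\<phi> h x0) \<le> \<rho> r"
      if "g \<in> carrier G" "h \<in> carrier G" "dG g h \<le> r" for g h r
    proof -
      have hi: "inv\<^bsub>G\<^esub> h \<in> carrier G" using that(2) by (rule G.inv_closed)
      have e: "inv\<^bsub>G\<^esub> h \<otimes>\<^bsub>G\<^esub> h = \<one>\<^bsub>G\<^esub>" using that(2) by (rule G.l_inv)
      have mc: "inv\<^bsub>G\<^esub> h \<otimes>\<^bsub>G\<^esub> g \<in> carrier G" using hi that(1) by (rule G.m_closed)
      have "dG (inv\<^bsub>G\<^esub> h \<otimes>\<^bsub>G\<^esub> g) (inv\<^bsub>G\<^esub> h \<otimes>\<^bsub>G\<^esub> h) = dG g h"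
        by (rule assms(5)[OF hi that(1) that(2)])
      hence eq: "dG (inv\<^bsub>G\<^esub> h \<otimes>\<^bsub>G\<^esub> g) \<one>\<^bsub>G\<^esub> = dG g h" by (simp only: e)
      have "dG (inv\<^bsub>G\<^esub> h \<otimes>\<^bsub>G\<^esub> g) \<one>\<^bsub>G\<^esub> \<le> r" using eq that(3) by linarith
      hence "inv\<^bsub>G\<^esub> h \<otimes>\<^bsub>G\<^esub> g \<in> ball r" unfolding ball_def using mc by blast
      from ball_mem[OF this] have "dX (\<phi> (inv\<^bsub>G\<^esub> h \<otimes>\<^bsub>G\<^esub> g) x0) x0 \<le> \<rho> r" .
      thus ?thesis unfolding backr[OF that(1,2)] .
    qed
    define R1 where "R1 i = \<rho> (R i + 1)" for i
    have R1pos: "\<forall>i. 0 < R1 i" unfolding R1_def using \<rho>_pos by blast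
    have R1mono: "mono R1"
    proof (rule monoI)
      fix i j :: nat assume "i \<le> j"
      hence "R i \<le> R j" using R by (simp add: monoD)
      thus "R1 i \<le> R1 j" unfolding R1_def by (intro \<rho>_mono) simp
    qed
    obtain n Y where nY: "n \<ge> 1" "\<forall>i<n. Y i \<subseteq> Pow M"
      "decomposes dX {M} (R1 0) (Y 0)"
      "\<forall>i. 0 < i \<and> i < n \<longrightarrow> decomposes dX (Y (i - 1)) (R1 i) (Y i)"
      "uniformly_bounded dX (Y (n - 1))"
      by (rule sfdcE[OF assms(9) conjI[OF R1pos R1mono]])
    define pre where "pre A = {g\<in>carrier G. \<phi> g x0 \<in> A}" for A
    define P where "P i = pre ` Y i" for i
    have preM: "pre M = carrier G"
    proof
      show "pre M \<subseteq> carrier G" unfolding pre_def by blast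
      show "carrier G \<subseteq> pre M" unfolding pre_def using orb assms(10) by blast
    qed
    have Pdec: "decomposes dG (pre ` \<X>) (R i) (pre ` \<Y>)"
      if dd: "decomposes dX \<X> (R1 i) \<Y>" for \<X> \<Y> i
    proof -
      have KK: "dX (\<phi> g x0) (\<phi> h x0) \<le> R1 i"
        if "g \<in> carrier G" "h \<in> carrier G" "dG g h \<le> R i + 1" for g h
        unfolding R1_def using that by (rule K)
      have lt1: "R i < R i + 1" by simp
      have pm: "g \<in> pre A \<longleftrightarrow> g \<in> carrier G \<and> \<phi> g x0 \<in> A" for A g
        unfolding pre_def by simp
      from decomp_pre[of pre "carrier G" "\<lambda>g. \<phi> g x0" dG "R i + 1" dX "R1 i" "R i", OF pm KK lt1 dd]
      show ?thesis .
    qed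
    have P0: "decomposes dG {carrier G} (R 0) (P 0)"
    proof -
      have "decomposes dG (pre ` {M}) (R 0) (pre ` Y 0)" by (rule Pdec[OF nY(3)])
      thus ?thesis unfolding P_def using preM by simp
    qed
    have Pch: "decomposes dG (P (i - 1)) (R i) (P i)" if "0 < i" "i < n" for i
    proof -
      have "decomposes dX (Y (i - 1)) (R1 i) (Y i)" using nY(4) that by blast
      thus ?thesis unfolding P_def by (rule Pdec)
    qed
    have Ppow: "P i \<subseteq> Pow (carrier G)" for i unfolding P_def pre_def by blast
    from nY(5) obtain B where B: "\<forall>Y\<in>Y (n - 1). \<forall>a\<in>Y. \<forall>b\<in>Y. dX a b \<le> B"
      unfolding uniformly_bounded_def by blast
    define S where "S = max B 1"
    define Stab where "Stab = {g \<in> carrier G. dX (\<phi> g x0) x0 \<le> S}"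
    have SFS: "straight_FDC Stab dG" unfolding Stab_def by (rule assms(11)) (simp add: S_def)
    define R2 where "R2 i = R (n + i)" for i
    have R2pos: "\<forall>i. 0 < R2 i" unfolding R2_def using R by blast
    have R2mono: "mono R2"
    proof (rule monoI)
      fix i j :: nat assume "i \<le> j"
      hence "n + i \<le> n + j" by simp
      thus "R2 i \<le> R2 j" unfolding R2_def using R by (simp add: monoD)
    qed
    obtain m Z where mZ: "m \<ge> 1" "\<forall>i<m. Z i \<subseteq> Pow Stab"
      "decomposes dG {Stab} (R2 0) (Z 0)"
      "\<forall>i. 0 < i \<and> i < m \<longrightarrow> decomposes dG (Z (i - 1)) (R2 i) (Z i)"
      "uniformly_bounded dG (Z (m - 1))"
      by (rule sfdcE[OF SFS conjI[OF R2pos R2mono]])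
    define T where "T g k = g \<otimes>\<^bsub>G\<^esub> k" for g k
    have cover: "\<exists>g. g \<in> carrier G \<and> W \<subseteq> T g ` Stab" if "W \<in> P (n - 1)" for W
    proof (cases "W = {}")
      case True
      have "\<one>\<^bsub>G\<^esub> \<in> carrier G" by (rule G.one_closed)
      thus ?thesis unfolding True by blast
    next
      case False
      then obtain g0 where g0: "g0 \<in> W" by blast
      from that obtain A where A: "A \<in> Y (n - 1)" "W = pre A" unfolding P_def by blast
      have g0c: "g0 \<in> carrier G" and g0A: "\<phi> g0 x0 \<in> A" using g0 unfolding A(2) pre_def by simp_all
      have "W \<subseteq> T g0 ` Stab"
      proof
        fix h assume h: "h \<in> W"
        hence hc: "h \<in> carrier G" and hA: "\<phi> h x0 \<in> A" unfolding A(2) pre_def by simp_all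
        have "dX (\<phi> h x0) (\<phi> g0 x0) \<le> B" using B A(1) hA g0A by blast
        hence le: "dX (\<phi> (inv\<^bsub>G\<^esub> g0 \<otimes>\<^bsub>G\<^esub> h) x0) x0 \<le> S"
          unfolding backr[OF hc g0c] S_def by simp
        have ic: "inv\<^bsub>G\<^esub> g0 \<in> carrier G" using g0c by (rule G.inv_closed)
        have mc: "inv\<^bsub>G\<^esub> g0 \<otimes>\<^bsub>G\<^esub> h \<in> carrier G" using ic hc by (rule G.m_closed)
        have inS: "inv\<^bsub>G\<^esub> g0 \<otimes>\<^bsub>G\<^esub> h \<in> Stab" unfolding Stab_def using mc le by blast
        have "g0 \<otimes>\<^bsub>G\<^esub> (inv\<^bsub>G\<^esub> g0 \<otimes>\<^bsub>G\<^esub> h) = (g0 \<otimes>\<^bsub>G\<^esub> inv\<^bsub>G\<^esub> g0) \<otimes>\<^bsub>G\<^esub> h"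
          using g0c ic hc by (rule G.m_assoc[symmetric])
        also have "\<dots> = h" using g0c hc by simp
        finally have "h = T g0 (inv\<^bsub>G\<^esub> g0 \<otimes>\<^bsub>G\<^esub> h)" unfolding T_def by simp
        thus "h \<in> T g0 ` Stab" using inS by blast
      qed
      thus ?thesis using g0c by blast
    qed
    define c where "c W = (SOME g. g \<in> carrier G \<and> W \<subseteq> T g ` Stab)" for W
    have cW: "c W \<in> carrier G \<and> W \<subseteq> T (c W) ` Stab" if "W \<in> P (n - 1)" for W
      unfolding c_def using someI_ex[OF cover[OF that]] .
    interpret L: liftctx "carrier G" dG Stab T c "P (n - 1)"
    proof
      show "dG (T g a) (T g b) = dG a b" if "g \<in> carrier G" "a \<in> carrier G" "b \<in> carrier G"
        for g a b using assms(5) that unfolding T_def by simp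
      show "c W \<in> carrier G \<and> W \<subseteq> T (c W) ` Stab" if "W \<in> P (n - 1)" for W using cW that .
      show "Stab \<subseteq> carrier G" unfolding Stab_def by auto
    qed
    define Q where "Q i = (if i < n then P i else L.lift (Z (i - n)))" for i
    show "\<exists>N\<ge>1. \<exists>\<Y>. (\<forall>i<N. \<Y> i \<subseteq> Pow (carrier G)) \<and>
           decomposes dG {carrier G} (R 0) (\<Y> 0) \<and>
           (\<forall>i. 0 < i \<and> i < N \<longrightarrow> decomposes dG (\<Y> (i - 1)) (R i) (\<Y> i)) \<and>
           uniformly_bounded dG (\<Y> (N - 1))"
    proof (intro exI[of _ "n + m"] exI[of _ Q] conjI allI impI)
      show "1 \<le> n + m" using nY(1) by simp
      show "Q i \<subseteq> Pow (carrier G)" for i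
        unfolding Q_def using Ppow L.lift_d[OF Ppow] by auto
      show "decomposes dG {carrier G} (R 0) (Q 0)" using P0 nY(1) unfolding Q_def by simp
      show "uniformly_bounded dG (Q (n + m - 1))"
      proof -
        have ge: "\<not> (n + m - 1 < n)" using mZ(1) by linarith
        have eqi: "n + m - 1 - n = m - 1" using mZ(1) by linarith
        have "Q (n + m - 1) = L.lift (Z (m - 1))" by (simp only: Q_def if_not_P[OF ge] eqi)
        thus ?thesis using L.lift_c[OF mZ(5)] mZ(1,2) by simp
      qed
      fix i assume i: "0 < i \<and> i < n + m"
      show "decomposes dG (Q (i - 1)) (R i) (Q i)"
      proof (cases "i < n")
        case True
        have a: "i - 1 < n" using True by linarith
        have "decomposes dG (P (i - 1)) (R i) (P i)" using i True by (intro Pch) auto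
        thus ?thesis by (simp only: Q_def if_P[OF a] if_P[OF True] if_True)
      next
        case False
        show ?thesis
        proof (cases "i = n")
          case True
          have m0: "0 < m" using mZ(1) by linarith
          have "Z 0 \<subseteq> Pow Stab" using mZ(2) m0 by blast
          hence "decomposes dG (P (n - 1)) (R2 0) (L.lift (Z 0))"
            by (rule L.lift_a[OF mZ(3)])
          moreover have a: "n - 1 < n" using nY(1) by linarith
          moreover have b: "\<not> n < n" by simp
          ultimately show ?thesis unfolding True
            by (simp only: Q_def R2_def if_P[OF a] if_not_P[OF b] diff_self_eq_0 add_0_right if_True if_False)
        next
          case False2: False
          define j where "j = i - n"
          have j: "0 < j" "j < m" "i = n + j" using i False False2 unfolding j_def by auto
          have "decomposes dG (Z (j - 1)) (R2 j) (Z j)" using mZ(4) j by blast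
          moreover have "Z (j - 1) \<subseteq> Pow Stab" using mZ(2) j by simp
          moreover have "Z j \<subseteq> Pow Stab" using mZ(2) j by simp
          ultimately have "decomposes dG (L.lift (Z (j - 1))) (R2 j) (L.lift (Z j))"
            by (rule L.lift_b)
          moreover have c1: "\<not> (i - 1 < n)" using j by linarith
          moreover have c2: "\<not> (i < n)" using j by linarith
          moreover have c3: "i - 1 - n = j - 1" using j by linarith
          moreover have c4: "i - n = j" using j by linarith
          moreover have c5: "R2 j = R i" unfolding R2_def using j by simp
          ultimately show ?thesis
            by (simp only: Q_def if_not_P[OF c1] if_not_P[OF c2] c3 c4 if_True if_False c5)
        qed
      qed
    qed
  qed
qed

end
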